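(* Let $\{(X_h^{(t)})_{h=1}^H\}_{t\in[T]}$ be i.i.d. copies of a possibly time-inhomogeneous Markov chain on a finite state space $\mathcal Z$ with initial distribution $\mu$ ($X_1^{(t)}\sim\mu$) and transition matrices $(P_h)_{h\ge1}$ ($X_{h+1}^{(t)}\sim P_h(X_h^{(t)},\cdot)$). Assume $\mu$ and all $P_h$ are $\eta$-regular for some $\eta\ge1$, and each $P_h$ admits a stationary distribution $\nu_h$. Let $\phi_h:\mathcal Z\to\mathbb R$, $h\in[H]$, be bounded functions. Then for all $\rho\ge0$, $$\mathbb P\Big[\sum_{t=1}^T\sum_{h=1}^H\big(\phi_h(X_h^{(t)})-\mathbb E_\mu[\phi_h(X_h^{(t)})]\big)>\rho\Big]\le\exp\Big(-\frac{\rho^2}{2TH\,V_{\mu,P,\phi}+\frac23M_{P,\phi}\rho}\Big),$$ where $V_{\mu,P,\phi}=(1+\sqrt2\,\eta(2\eta-1))^2\max_{z\in\mathcal Z}\max_{1\le\ell\le h\le H}\mathrm{Var}_{P_{\ell-1}(z,\cdot)}[\phi_h]$ and $M_{P,\phi}=(2\eta-1)\max_{h\in[H]}\|\phi_h\|_\infty$, with the convention $P_0(z,\cdot)=\mu$.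
   Context: A probability distribution $\nu$ on $\mathcal Z$ is $\eta$-regular if $\max_{z_1,z_2}\nu(z_1)/\nu(z_2)\le\eta$. A transition matrix $P$ on $\mathcal Z$ is $\eta$-regular if $\max_{x,y,z\in\mathcal Z}\max\{P(y|x)/P(z|x),\,P(x|y)/P(x|z)\}\le\eta$ (here $P(y|x)=P(x,y)$). $\mathrm{Var}_{\nu}[\phi]$ denotes the variance of $\phi(Z)$ for $Z\sim\nu$, and $\mathbb E_\mu[\phi_h(X_h^{(t)})]$ is the expectation when $X_1^{(t)}\sim\mu$. *)

theory Defs
  imports "HOL-Probability.Probability"
begin

definition regular_dist :: "real \<Rightarrow> 'z pmf \<Rightarrow> bool" where
  "regular_dist \<eta> \<nu> \<longleftrightarrow> (\<forall>z1 z2. pmf \<nu> z1 \<le> \<eta> * pmf \<nu> z2)"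

text \<open>A transition matrix (row x is the pmf P x, P(y|x) = pmf (P x) y) is eta-regular.\<close>
definition regular_kernel :: "real \<Rightarrow> ('z \<Rightarrow> 'z pmf) \<Rightarrow> bool" where
  "regular_kernel \<eta> P \<longleftrightarrow>
     (\<forall>x y z. pmf (P x) y \<le> \<eta> * pmf (P x) z \<and> pmf (P y) x \<le> \<eta> * pmf (P z) x)"

definition stationary :: "('z \<Rightarrow> 'z pmf) \<Rightarrow> 'z pmf \<Rightarrow> bool" where
  "stationary P \<nu> \<longleftrightarrow> bind_pmf \<nu> P = \<nu>"

definition step_kernel :: "'z pmf \<Rightarrow> (nat \<Rightarrow> 'z \<Rightarrow> 'z pmf) \<Rightarrow> nat \<Rightarrow> 'z \<Rightarrow> 'z pmf" where
  "step_kernel \<mu> P n x = (if n = 0 then \<mu> else P n x)"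

text \<open>Law of the path (X_1,...,X_n) of the time-inhomogeneous chain, as a function
  h \<mapsto> X_h (coordinates outside 1..n are undefined):
  X_1 ~ mu, X_(h+1) ~ P_h(X_h, .).\<close>
fun markov_path :: "'z pmf \<Rightarrow> (nat \<Rightarrow> 'z \<Rightarrow> 'z pmf) \<Rightarrow> nat \<Rightarrow> (nat \<Rightarrow> 'z) pmf" where
  "markov_path \<mu> P 0 = return_pmf (\<lambda>_. undefined)"
| "markov_path \<mu> P (Suc n) =
     bind_pmf (markov_path \<mu> P n) (\<lambda>x.
       map_pmf (\<lambda>z. x(Suc n := z)) (step_kernel \<mu> P n (x n)))"

definition iid_paths :: "'z pmf \<Rightarrow> (nat \<Rightarrow> 'z \<Rightarrow> 'z pmf) \<Rightarrow> nat \<Rightarrow> nat \<Rightarrow> (nat \<Rightarrow> nat \<Rightarrow> 'z) pmf" where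
  "iid_paths \<mu> P H T = Pi_pmf {1..T} (\<lambda>_. undefined) (\<lambda>_. markov_path \<mu> P H)"

definition V_const :: "real \<Rightarrow> 'z::finite pmf \<Rightarrow> (nat \<Rightarrow> 'z \<Rightarrow> 'z pmf) \<Rightarrow> (nat \<Rightarrow> 'z \<Rightarrow> real) \<Rightarrow> nat \<Rightarrow> real" where
  "V_const \<eta> \<mu> P \<phi> H = (1 + sqrt 2 * \<eta> * (2 * \<eta> - 1))\<^sup>2 *
     Max {measure_pmf.variance (step_kernel \<mu> P (l - 1) z) (\<phi> h) | z l h. 1 \<le> l \<and> l \<le> h \<and> h \<le> H}"

definition M_const :: "real \<Rightarrow> (nat \<Rightarrow> 'z::finite \<Rightarrow> real) \<Rightarrow> nat \<Rightarrow> real" where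
  "M_const \<eta> \<phi> H = (2 * \<eta> - 1) * Max {\<bar>\<phi> h z\<bar> | h z. h \<in> {1..H}}"

end

theory Submission
  imports Defs
begin


lemma exp_quad_upper_nonpos:
  fixes x :: real assumes "x \<le> 0" shows "exp x \<le> 1 + x + x\<^sup>2 / 2"
proof -
  obtain t where t: "exp x = (\<Sum>m<3. x ^ m / fact m) + exp t / fact 3 * x ^ 3"
    using Maclaurin_exp_le[of x 3] by blast
  have "x ^ 3 \<le> 0" using assms by (simp add: power_le_zero_eq)
  have "exp t / fact 3 \<ge> 0" by simp
  hence "exp t / fact 3 * x ^ 3 \<le> 0" using mult_nonneg_nonpos \<open>x ^ 3 \<le> 0\<close> by blast
  moreover have "(\<Sum>m<3. x ^ m / fact m) = 1 + x + x\<^sup>2 / 2"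
    by (simp add: numeral_3_eq_3 power2_eq_square)
  ultimately show ?thesis using t by linarith
qed

lemma G_nonneg:
  fixes t :: real assumes "0 \<le> t" shows "0 \<le> (t - 2) * exp t + t + 2"
proof -
  have d1: "0 \<le> (s - 1) * exp s + 1" if s0: "0 \<le> s" for s :: real
  proof -
    have "(\<lambda>r. (r - 1) * exp r + 1) 0 \<le> (\<lambda>r. (r - 1) * exp r + 1) s"
    proof (rule deriv_nonneg_imp_mono[where g="\<lambda>r. (r - 1) * exp r + 1" and g'="\<lambda>r. r * exp r"])
      fix r :: real assume "r \<in> {0..s}"
      show "((\<lambda>r. (r - 1) * exp r + 1) has_real_derivative r * exp r) (at r)"
        by (auto intro!: derivative_eq_intros simp: algebra_simps)
      show "0 \<le> r * exp r" using \<open>r \<in> {0..s}\<close> by auto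
    qed (use s0 in auto)
    thus ?thesis by simp
  qed
  have "(\<lambda>r. (r - 2) * exp r + r + 2) 0 \<le> (\<lambda>r. (r - 2) * exp r + r + 2) t"
  proof (rule deriv_nonneg_imp_mono[where g="\<lambda>r. (r - 2) * exp r + r + 2" and g'="\<lambda>r. (r - 1) * exp r + 1"])
    fix r :: real assume "r \<in> {0..t}"
    show "((\<lambda>r. (r - 2) * exp r + r + 2) has_real_derivative (r - 1) * exp r + 1) (at r)"
      by (auto intro!: derivative_eq_intros simp: algebra_simps)
    show "0 \<le> (r - 1) * exp r + 1" using \<open>r \<in> {0..t}\<close> d1 by auto
  qed (use assms in auto)
  thus ?thesis by simp
qed

lemma q_mono:
  fixes x a :: real assumes "0 < x" "x \<le> a"
  shows "(exp x - 1 - x) / x\<^sup>2 \<le> (exp a - 1 - a) / a\<^sup>2"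
proof -
  have "(\<lambda>t. (exp t - 1 - t) / t\<^sup>2) x \<le> (\<lambda>t. (exp t - 1 - t) / t\<^sup>2) a"
  proof (rule deriv_nonneg_imp_mono[where g="\<lambda>t. (exp t - 1 - t) / t\<^sup>2" and g'="\<lambda>t. ((t - 2) * exp t + t + 2) / t ^ 3"])
    fix t assume t: "t \<in> {x..a}"
    hence tp: "t > 0" using assms by auto
    show "((\<lambda>t. (exp t - 1 - t) / t\<^sup>2) has_real_derivative ((t - 2) * exp t + t + 2) / t ^ 3) (at t)"
      using tp
      apply (auto intro!: derivative_eq_intros)
      by (simp add: field_simps eval_nat_numeral)
    show "0 \<le> ((t - 2) * exp t + t + 2) / t ^ 3"
      using tp G_nonneg[of t] by simp
  qed (use assms in auto)
  thus ?thesis by simp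
qed

lemma bennett_pointwise:
  fixes x a :: real assumes "0 < a" "x \<le> a"
  shows "a\<^sup>2 * (exp x - 1 - x) \<le> x\<^sup>2 * (exp a - 1 - a)"
proof (cases "x \<le> 0")
  case True
  have "exp x - 1 - x \<le> x\<^sup>2 / 2" using exp_quad_upper_nonpos[OF True] by simp
  hence "a\<^sup>2 * (exp x - 1 - x) \<le> a\<^sup>2 * (x\<^sup>2 / 2)" by (intro mult_left_mono) auto
  also have "\<dots> = x\<^sup>2 * (a\<^sup>2 / 2)" by simp
  also have "\<dots> \<le> x\<^sup>2 * (exp a - 1 - a)"
    using exp_lower_Taylor_quadratic[of a] assms by (intro mult_left_mono) auto
  finally show ?thesis .
next
  case False
  hence "(exp x - 1 - x) / x\<^sup>2 \<le> (exp a - 1 - a) / a\<^sup>2" using q_mono assms by auto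
  thus ?thesis using False assms by (simp add: field_simps)
qed

lemma w_ineq:
  fixes w :: real assumes "1 \<le> w" shows "0 \<le> 2 * w * ln w - 5 * w + 29"
proof -
  have e1: "exp 1 \<le> (3::real)" by (rule exp_le)
  have ln_ge: "real k \<le> ln w" if "3 ^ k \<le> w" for k :: nat
  proof -
    have "exp (real k) = exp 1 ^ k" by (simp add: exp_of_nat_mult[symmetric])
    also have "\<dots> \<le> 3 ^ k" by (rule power_mono[OF e1]) simp
    finally have "exp (real k) \<le> w" using that by simp
    thus ?thesis using assms by (subst ln_ge_iff) auto
  qed
  have l0: "0 \<le> ln w" using assms by simp
  show ?thesis
  proof (cases "w \<le> 3")
    case True thus ?thesis using l0 assms by (smt (verit) mult_nonneg_nonneg)
  next
    case F3: False
    show ?thesis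
    proof (cases "w \<le> 9")
      case True
      have "1 \<le> ln w" using ln_ge[of 1] F3 by simp
      hence "2 * w * 1 \<le> 2 * w * ln w" using assms by (intro mult_left_mono) auto
      thus ?thesis using True by linarith
    next
      case F9: False
      show ?thesis
      proof (cases "w \<le> 27")
        case True
        have "2 \<le> ln w" using ln_ge[of 2] F9 by simp
        hence "2 * w * 2 \<le> 2 * w * ln w" using assms by (intro mult_left_mono) auto
        thus ?thesis using True by linarith
      next
        case False
        have "3 \<le> ln w" using ln_ge[of 3] False by simp
        hence "2 * w * 3 \<le> 2 * w * ln w" using assms by (intro mult_left_mono) auto
        thus ?thesis using assms by linarith
      qed
    qed
  qed
qed

lemma dF': "0 \<le> (t::real) \<Longrightarrow> ((\<lambda>u::real. ((1 + u) * ln (1 + u) - u) / 3 + (10 + u / 3) * ln (1 + u) - 2 * u) has_real_derivative 2/3 * ln (1 + t) + (10 + t/3) / (1 + t) - 2) (at t)"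
  apply (rule DERIV_cong)
   apply (rule derivative_eq_intros refl | force)+
  done
lemma dF: "0 \<le> (t::real) \<Longrightarrow> ((\<lambda>u::real. (10 + u / 3) * ((1 + u) * ln (1 + u) - u) - u\<^sup>2) has_real_derivative ((1 + t) * ln (1 + t) - t) / 3 + (10 + t / 3) * ln (1 + t) - 2 * t) (at t)"
  apply (rule DERIV_cong)
   apply (rule derivative_eq_intros refl | force)+
  done

lemma h_ineq:
  fixes u :: real assumes "0 \<le> u"
  shows "u\<^sup>2 \<le> (10 + u / 3) * ((1 + u) * ln (1 + u) - u)"
proof -
  define F' where "F' = (\<lambda>u::real. ((1 + u) * ln (1 + u) - u) / 3 + (10 + u / 3) * ln (1 + u) - 2 * u)"
  have F'0: "0 \<le> F' u" if "0 \<le> u" for u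
  proof -
    have "F' 0 \<le> F' u"
    proof (rule deriv_nonneg_imp_mono[where g=F' and g'="\<lambda>u. 2/3 * ln (1 + u) + (10 + u/3) / (1 + u) - 2"])
      fix t assume t: "t \<in> {0..u}"
      show "(F' has_real_derivative 2/3 * ln (1 + t) + (10 + t/3) / (1 + t) - 2) (at t)"
        unfolding F'_def using dF' t by auto
      have "0 \<le> 2 * (1 + t) * ln (1 + t) - 5 * (1 + t) + 29" using w_ineq[of "1 + t"] t by auto
      hence "0 \<le> (2 * (1 + t) * ln (1 + t) - 5 * (1 + t) + 29) / (3 * (1 + t))" using t by auto
      also have "\<dots> = 2/3 * ln (1 + t) + (10 + t/3) / (1 + t) - 2" using t by (simp add: field_simps)
      finally show "0 \<le> 2/3 * ln (1 + t) + (10 + t/3) / (1 + t) - 2" .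
    qed (use that in auto)
    thus ?thesis by (simp add: F'_def)
  qed
  define F where "F = (\<lambda>u::real. (10 + u / 3) * ((1 + u) * ln (1 + u) - u) - u\<^sup>2)"
  have "F 0 \<le> F u"
  proof (rule deriv_nonneg_imp_mono[where g=F and g'=F'])
    fix t assume t: "t \<in> {0..u}"
    show "(F has_real_derivative F' t) (at t)"
      unfolding F_def F'_def using dF t by auto
    show "0 \<le> F' t" using F'0 t by auto
  qed (use assms in auto)
  thus ?thesis by (simp add: F_def)
qed



lemma E_sum:
  fixes p :: "'z::finite pmf" and f :: "'z \<Rightarrow> real"
  shows "measure_pmf.expectation p f = (\<Sum>z\<in>UNIV. pmf p z * f z)"
  by (subst integral_measure_pmf[of UNIV]) auto

lemma pmf_sum1: "(\<Sum>z\<in>UNIV. pmf p z) = 1" for p :: "'z::finite pmf"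
  by (rule sum_pmf_eq_1) auto

lemma Var_sum:
  fixes p :: "'z::finite pmf" and f :: "'z \<Rightarrow> real"
  shows "measure_pmf.variance p f = (\<Sum>z\<in>UNIV. pmf p z * (f z - measure_pmf.expectation p f)\<^sup>2)"
  by (rule E_sum)

lemma absdev_le:
  fixes p :: "'z::finite pmf" and f :: "'z \<Rightarrow> real"
  defines "e \<equiv> measure_pmf.expectation p f"
  shows "(\<Sum>z\<in>UNIV. pmf p z * \<bar>f z - e\<bar>) \<le> sqrt (measure_pmf.variance p f)"
proof -
  define d where "d = (\<Sum>z\<in>UNIV. pmf p z * \<bar>f z - e\<bar>)"
  have "0 \<le> (\<Sum>z\<in>UNIV. pmf p z * (\<bar>f z - e\<bar> - d)\<^sup>2)"
    by (intro sum_nonneg mult_nonneg_nonneg) auto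
  also have "\<dots> = (\<Sum>z\<in>UNIV. pmf p z * (f z - e)\<^sup>2) - 2 * d * (\<Sum>z\<in>UNIV. pmf p z * \<bar>f z - e\<bar>) + d\<^sup>2 * (\<Sum>z\<in>UNIV. pmf p z)"
    by (simp add: power2_eq_square algebra_simps sum.distrib sum_subtractf sum_distrib_left)
  also have "\<dots> = (\<Sum>z\<in>UNIV. pmf p z * (f z - e)\<^sup>2) - d\<^sup>2"
    by (simp add: pmf_sum1 d_def power2_eq_square)
  also have "\<dots> = measure_pmf.variance p f - d\<^sup>2"
    by (simp add: Var_sum e_def)
  finally have "d\<^sup>2 \<le> measure_pmf.variance p f" by simp
  thus ?thesis unfolding d_def by (rule real_le_rsqrt)
qed

lemma sum_lin:
  fixes q p f :: "'z \<Rightarrow> real"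
  shows "(\<Sum>z\<in>A. (q z - p z) * (f z - c)) = (\<Sum>z\<in>A. q z * f z) - (\<Sum>z\<in>A. p z * f z) - c * ((\<Sum>z\<in>A. q z) - (\<Sum>z\<in>A. p z))"
proof -
  have "(\<Sum>z\<in>A. (q z - p z) * (f z - c)) = (\<Sum>z\<in>A. (q z * f z - p z * f z) - (c * q z - c * p z))"
    by (rule sum.cong) (auto simp: algebra_simps)
  moreover have "(\<Sum>z\<in>A. c * q z) = c * sum q A" "(\<Sum>z\<in>A. c * p z) = c * sum p A"
    by (simp_all add: sum_distrib_left)
  ultimately show ?thesis by (simp add: sum_subtractf right_diff_distrib)
qed

lemma sum_centered:
  fixes q p :: "'z::finite pmf" and f :: "'z \<Rightarrow> real"
  shows "(\<Sum>z\<in>UNIV. (pmf q z - pmf p z) * (f z - c)) = measure_pmf.expectation q f - measure_pmf.expectation p f"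
  by (simp add: sum_lin pmf_sum1 E_sum)

definition colreg :: "real \<Rightarrow> ('z \<Rightarrow> 'z pmf) \<Rightarrow> bool" where
  "colreg \<eta> K \<longleftrightarrow> (\<forall>x y z. pmf (K y) x \<le> \<eta> * pmf (K z) x)"

lemma meandiff:
  fixes K :: "'z::finite \<Rightarrow> 'z pmf" and f :: "'z \<Rightarrow> real"
  assumes "colreg \<eta> K" "1 \<le> \<eta>"
  shows "measure_pmf.expectation (K x) f - measure_pmf.expectation (K x') f
           \<le> (\<eta> - 1) * sqrt (measure_pmf.variance (K x') f)"
proof -
  define e where "e = measure_pmf.expectation (K x') f"
  have le: "\<bar>pmf (K x) z - pmf (K x') z\<bar> \<le> (\<eta> - 1) * pmf (K x') z" for z
  proof -
    have a: "pmf (K x) z \<le> \<eta> * pmf (K x') z" using assms(1) by (auto simp: colreg_def)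
    have b: "pmf (K x') z \<le> \<eta> * pmf (K x) z" using assms(1) by (auto simp: colreg_def)
    have "pmf (K x') z - pmf (K x) z \<le> (\<eta> - 1) * pmf (K x') z"
    proof -
      have "pmf (K x') z * 1 \<le> pmf (K x') z * (\<eta> - 1) * \<eta> + \<eta> * pmf (K x) z - pmf (K x') z * (\<eta> - 1) * \<eta> "
        using b by simp
      have "(\<eta> - 1) * (\<eta> - 1) \<ge> 0" by simp
      hence "pmf (K x') z * ((\<eta> - 1) * (\<eta> - 1)) \<ge> 0" by simp
      hence "\<eta> * (pmf (K x') z - pmf (K x) z) \<le> \<eta> * ((\<eta> - 1) * pmf (K x') z)"
        using b by (simp add: algebra_simps)
      thus ?thesis using assms(2) by simp
    qed
    thus ?thesis using a by (simp add: abs_le_iff algebra_simps)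
  qed
  have "measure_pmf.expectation (K x) f - e = (\<Sum>z\<in>UNIV. (pmf (K x) z - pmf (K x') z) * (f z - e))"
    by (simp add: sum_centered e_def)
  also have "\<dots> \<le> (\<Sum>z\<in>UNIV. (\<eta> - 1) * (pmf (K x') z * \<bar>f z - e\<bar>))"
  proof (rule sum_mono)
    fix z
    have "(pmf (K x) z - pmf (K x') z) * (f z - e) \<le> \<bar>pmf (K x) z - pmf (K x') z\<bar> * \<bar>f z - e\<bar>"
      by (metis abs_ge_self abs_mult)
    also have "\<dots> \<le> (\<eta> - 1) * pmf (K x') z * \<bar>f z - e\<bar>"
      by (intro mult_right_mono le) auto
    finally show "(pmf (K x) z - pmf (K x') z) * (f z - e) \<le> (\<eta> - 1) * (pmf (K x') z * \<bar>f z - e\<bar>)"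
      by simp
  qed
  also have "\<dots> = (\<eta> - 1) * (\<Sum>z\<in>UNIV. pmf (K x') z * \<bar>f z - e\<bar>)"
    by (simp add: sum_distrib_left)
  also have "\<dots> \<le> (\<eta> - 1) * sqrt (measure_pmf.variance (K x') f)"
    using absdev_le[of "K x'" f] assms(2) unfolding e_def by (intro mult_left_mono) auto
  finally show ?thesis unfolding e_def .
qed

lemma dobrushin:
  fixes K :: "'z::finite \<Rightarrow> 'z pmf" and g :: "'z \<Rightarrow> real"
  assumes "colreg \<eta> K" "1 \<le> \<eta>" "\<And>y y'. g y - g y' \<le> Om"
  shows "measure_pmf.expectation (K x) g - measure_pmf.expectation (K x') g \<le> (1 - 1 / \<eta>) * Om"
proof -
  define m0 where "m0 = Min (range g)"
  have m0: "m0 \<le> g y" for y unfolding m0_def by (rule Min_le) auto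
  have "m0 \<in> range g" unfolding m0_def by (rule Min_in) auto
  then obtain y0 where y0: "m0 = g y0" by auto
  have "measure_pmf.expectation (K x) g - measure_pmf.expectation (K x') g
        = (\<Sum>z\<in>UNIV. (pmf (K x) z - pmf (K x') z) * (g z - m0))"
    by (simp add: sum_centered)
  also have "\<dots> \<le> (\<Sum>z\<in>UNIV. (1 - 1 / \<eta>) * (pmf (K x) z * (g z - m0)))"
  proof (rule sum_mono)
    fix z
    have b: "pmf (K x) z \<le> \<eta> * pmf (K x') z" using assms(1) by (auto simp: colreg_def)
    hence "pmf (K x) z / \<eta> \<le> pmf (K x') z" using assms(2) by (simp add: field_simps)
    hence "pmf (K x) z - pmf (K x') z \<le> (1 - 1 / \<eta>) * pmf (K x) z" by (simp add: algebra_simps)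
    thus "(pmf (K x) z - pmf (K x') z) * (g z - m0) \<le> (1 - 1 / \<eta>) * (pmf (K x) z * (g z - m0))"
      using m0[of z] by (metis mult.assoc mult_right_mono diff_ge_0_iff_ge)
  qed
  also have "\<dots> = (1 - 1 / \<eta>) * (\<Sum>z\<in>UNIV. pmf (K x) z * (g z - m0))"
    by (simp add: sum_distrib_left)
  also have "\<dots> \<le> (1 - 1 / \<eta>) * Om"
  proof (rule mult_left_mono)
    have "(\<Sum>z\<in>UNIV. pmf (K x) z * (g z - m0)) \<le> (\<Sum>z\<in>UNIV. pmf (K x) z * Om)"
      using assms(3) y0 by (intro sum_mono mult_left_mono) auto
    also have "\<dots> = Om" by (simp add: sum_distrib_right[symmetric] pmf_sum1)
    finally show "(\<Sum>z\<in>UNIV. pmf (K x) z * (g z - m0)) \<le> Om" .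
    show "0 \<le> 1 - 1 / \<eta>" using assms(2) by simp
  qed
  finally show ?thesis .
qed

lemma var_add_osc:
  fixes p :: "'z::finite pmf" and a g :: "'z \<Rightarrow> real"
  assumes "\<And>y y'. g y - g y' \<le> Om"
  shows "measure_pmf.variance p (\<lambda>z. a z + g z) \<le> (sqrt (measure_pmf.variance p a) + Om / 2)\<^sup>2"
proof -
  define c where "c = (Max (range g) + Min (range g)) / 2"
  have "Max (range g) \<in> range g" "Min (range g) \<in> range g" by (auto intro!: Max_in Min_in)
  then obtain y1 y2 where y: "Max (range g) = g y1" "Min (range g) = g y2" by (metis rangeE)
  have mx: "g y \<le> Max (range g)" "Min (range g) \<le> g y" for y by (auto intro!: Max_ge Min_le)
  have B: "\<bar>g y - c\<bar> \<le> Om / 2" for y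
    using mx[of y] assms[of y1 y2] y unfolding c_def by (auto simp: abs_le_iff field_simps)
  have O0: "0 \<le> Om" using assms[of y1 y1] by simp
  define ea where "ea = measure_pmf.expectation p a"
  define eg where "eg = measure_pmf.expectation p (\<lambda>z. a z + g z)"
  define s where "s = sqrt (measure_pmf.variance p a)"
  have var_le: "measure_pmf.variance p (\<lambda>z. a z + g z) \<le> (\<Sum>z\<in>UNIV. pmf p z * (a z + g z - (ea + c))\<^sup>2)"
  proof -
    have "(\<Sum>z\<in>UNIV. pmf p z * (a z + g z - (ea + c))\<^sup>2)
       = (\<Sum>z\<in>UNIV. pmf p z * (a z + g z - eg)\<^sup>2) + 2 * (eg - (ea + c)) * ((\<Sum>z\<in>UNIV. pmf p z * (a z + g z)) - eg * (\<Sum>z\<in>UNIV. pmf p z)) + (eg - (ea + c))\<^sup>2 * (\<Sum>z\<in>UNIV. pmf p z)"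
      by (simp add: power2_eq_square algebra_simps sum.distrib sum_subtractf sum_distrib_left)
    also have "\<dots> = (\<Sum>z\<in>UNIV. pmf p z * (a z + g z - eg)\<^sup>2) + (eg - (ea + c))\<^sup>2"
      by (simp add: pmf_sum1 eg_def E_sum)
    finally show ?thesis by (simp add: Var_sum eg_def)
  qed
  also have "\<dots> \<le> (\<Sum>z\<in>UNIV. pmf p z * (a z - ea)\<^sup>2) + Om * (\<Sum>z\<in>UNIV. pmf p z * \<bar>a z - ea\<bar>) + (Om / 2)\<^sup>2 * (\<Sum>z\<in>UNIV. pmf p z)"
  proof -
    have "(\<Sum>z\<in>UNIV. pmf p z * (a z + g z - (ea + c))\<^sup>2) \<le> (\<Sum>z\<in>UNIV. pmf p z * (a z - ea)\<^sup>2 + Om * (pmf p z * \<bar>a z - ea\<bar>) + (Om / 2)\<^sup>2 * pmf p z)"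
    proof (rule sum_mono)
      fix z
      define A where "A = a z - ea"
      define G where "G = g z - c"
      have G: "\<bar>G\<bar> \<le> Om / 2" using B unfolding G_def by auto
      have "(a z + g z - (ea + c))\<^sup>2 = A\<^sup>2 + 2 * A * G + G\<^sup>2" unfolding A_def G_def by (simp add: power2_eq_square algebra_simps)
      also have "\<dots> \<le> A\<^sup>2 + Om * \<bar>A\<bar> + (Om / 2)\<^sup>2"
      proof -
        have "2 * A * G \<le> 2 * \<bar>A\<bar> * \<bar>G\<bar>" by (metis abs_ge_self abs_mult mult.assoc abs_of_pos zero_less_numeral)
        also have "\<dots> \<le> 2 * \<bar>A\<bar> * (Om / 2)" using G by (intro mult_left_mono) auto
        finally have 1: "2 * A * G \<le> Om * \<bar>A\<bar>" by (simp add: mult_ac)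
        have "G\<^sup>2 \<le> (Om / 2)\<^sup>2" using G by (metis abs_ge_zero power2_abs power_mono)
        with 1 show ?thesis by linarith
      qed
      finally have "(a z + g z - (ea + c))\<^sup>2 \<le> A\<^sup>2 + Om * \<bar>A\<bar> + (Om / 2)\<^sup>2" .
      hence "pmf p z * (a z + g z - (ea + c))\<^sup>2 \<le> pmf p z * (A\<^sup>2 + Om * \<bar>A\<bar> + (Om / 2)\<^sup>2)"
        by (intro mult_left_mono) auto
      thus "pmf p z * (a z + g z - (ea + c))\<^sup>2 \<le> pmf p z * (a z - ea)\<^sup>2 + Om * (pmf p z * \<bar>a z - ea\<bar>) + (Om / 2)\<^sup>2 * pmf p z"
        unfolding A_def by (simp add: algebra_simps)
    qed
    thus ?thesis by (simp add: sum.distrib sum_distrib_left sum_distrib_right)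
  qed
  also have "\<dots> \<le> s\<^sup>2 + Om * s + (Om / 2)\<^sup>2"
  proof -
    have v: "(\<Sum>z\<in>UNIV. pmf p z * (a z - ea)\<^sup>2) = s\<^sup>2"
      unfolding s_def ea_def by (simp add: Var_sum[symmetric])
    have "(\<Sum>z\<in>UNIV. pmf p z * \<bar>a z - ea\<bar>) \<le> s" unfolding s_def ea_def by (rule absdev_le)
    hence "Om * (\<Sum>z\<in>UNIV. pmf p z * \<bar>a z - ea\<bar>) \<le> Om * s" using O0 by (intro mult_left_mono)
    thus ?thesis using v by (simp add: pmf_sum1)
  qed
  also have "\<dots> = (s + Om / 2)\<^sup>2" by (simp add: power2_eq_square algebra_simps)
  finally show ?thesis unfolding s_def .
qed



lemma expectation_bind_pmf_bounded:
  fixes f :: "'b \<Rightarrow> real"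
  assumes "\<And>x. \<bar>f x\<bar> \<le> B"
  shows "measure_pmf.expectation (bind_pmf p q) f = measure_pmf.expectation p (\<lambda>x. measure_pmf.expectation (q x) f)"
  unfolding measure_pmf_bind
  apply (rule integral_bind[where K="count_space UNIV" and B=B and B'=1])
  using assms apply (auto simp: measure_pmf.emeasure_space_1 space_subprob_algebra intro!: measure_pmf.finite_measure prob_space_imp_subprob_space measure_pmf.prob_space_axioms)
  done

lemma int_bounded: "(\<And>x. \<bar>f x\<bar> \<le> C) \<Longrightarrow> integrable (measure_pmf p) (f :: _ \<Rightarrow> real)"
  by (intro measure_pmf.integrable_const_bound[where B=C]) auto

lemma mgf_step:
  fixes p :: "'z::finite pmf" and g :: "'z \<Rightarrow> real"
  assumes "\<And>y y'. g y - g y' \<le> b" "0 < b" "0 < l"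
  shows "measure_pmf.expectation p (\<lambda>z. exp (l * (g z - measure_pmf.expectation p g)))
           \<le> exp (measure_pmf.variance p g * ((exp (l * b) - 1 - l * b) / b\<^sup>2))"
proof -
  define e where "e = measure_pmf.expectation p g"
  define \<psi> where "\<psi> = (exp (l * b) - 1 - l * b) / b\<^sup>2"
  have Db: "g z - e \<le> b" for z
  proof -
    have "g z - e = (\<Sum>y\<in>UNIV. pmf p y * (g z - g y))"
      by (simp add: e_def E_sum right_diff_distrib sum_subtractf sum_distrib_right[symmetric] pmf_sum1)
    also have "\<dots> \<le> (\<Sum>y\<in>UNIV. pmf p y * b)" using assms(1) by (intro sum_mono mult_left_mono) auto
    also have "\<dots> = b" by (simp add: sum_distrib_right[symmetric] pmf_sum1)
    finally show ?thesis .
  qed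
  have pw: "exp (l * (g z - e)) \<le> 1 + l * (g z - e) + (g z - e)\<^sup>2 * \<psi>" for z
  proof -
    have "l * (g z - e) \<le> l * b" using Db[of z] assms by (intro mult_left_mono) auto
    from bennett_pointwise[OF _ this] assms
    have "(l * b)\<^sup>2 * (exp (l * (g z - e)) - 1 - l * (g z - e)) \<le> (l * (g z - e))\<^sup>2 * (exp (l * b) - 1 - l * b)"
      by auto
    hence "l\<^sup>2 * (b\<^sup>2 * (exp (l * (g z - e)) - 1 - l * (g z - e))) \<le> l\<^sup>2 * ((g z - e)\<^sup>2 * (exp (l * b) - 1 - l * b))"
      by (simp add: power_mult_distrib mult_ac)
    hence "b\<^sup>2 * (exp (l * (g z - e)) - 1 - l * (g z - e)) \<le> (g z - e)\<^sup>2 * (exp (l * b) - 1 - l * b)"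
      using assms by (simp add: mult_le_cancel_left)
    hence "exp (l * (g z - e)) - 1 - l * (g z - e) \<le> (g z - e)\<^sup>2 * \<psi>"
      using assms unfolding \<psi>_def by (simp add: field_simps)
    thus ?thesis by simp
  qed
  have "measure_pmf.expectation p (\<lambda>z. exp (l * (g z - e))) = (\<Sum>z\<in>UNIV. pmf p z * exp (l * (g z - e)))"
    by (rule E_sum)
  also have "\<dots> \<le> (\<Sum>z\<in>UNIV. pmf p z * (1 + l * (g z - e) + (g z - e)\<^sup>2 * \<psi>))"
    using pw by (intro sum_mono mult_left_mono) auto
  also have "\<dots> = (\<Sum>z\<in>UNIV. pmf p z) + l * (\<Sum>z\<in>UNIV. pmf p z * (g z - e)) + \<psi> * (\<Sum>z\<in>UNIV. pmf p z * (g z - e)\<^sup>2)"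
  proof -
    have "(\<Sum>z\<in>UNIV. pmf p z * (1 + l * (g z - e) + (g z - e)\<^sup>2 * \<psi>))
       = (\<Sum>z\<in>UNIV. pmf p z + l * (pmf p z * (g z - e)) + \<psi> * (pmf p z * (g z - e)\<^sup>2))"
      by (rule sum.cong) (auto simp: algebra_simps)
    also have "\<dots> = (\<Sum>z\<in>UNIV. pmf p z) + l * (\<Sum>z\<in>UNIV. pmf p z * (g z - e)) + \<psi> * (\<Sum>z\<in>UNIV. pmf p z * (g z - e)\<^sup>2)"
      by (simp only: sum.distrib sum_distrib_left[symmetric])
    finally show ?thesis .
  qed
  also have "(\<Sum>z\<in>UNIV. pmf p z * (g z - e)) = 0"
    by (simp add: e_def E_sum right_diff_distrib sum_subtractf sum_distrib_right[symmetric] pmf_sum1)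
  also have "(\<Sum>z\<in>UNIV. pmf p z * (g z - e)\<^sup>2) = measure_pmf.variance p g"
    by (simp add: Var_sum e_def)
  also have "(\<Sum>z\<in>UNIV. pmf p z) = 1" by (rule pmf_sum1)
  also have "1 + l * 0 + \<psi> * measure_pmf.variance p g \<le> exp (measure_pmf.variance p g * \<psi>)"
    using exp_ge_add_one_self[of "measure_pmf.variance p g * \<psi>"] by (simp add: mult_ac)
  finally show ?thesis unfolding e_def \<psi>_def .
qed



primrec Gf :: "(nat \<Rightarrow> 'z \<Rightarrow> 'z pmf) \<Rightarrow> (nat \<Rightarrow> 'z \<Rightarrow> real) \<Rightarrow> nat \<Rightarrow> nat \<Rightarrow> 'z \<Rightarrow> real" where
  "Gf P \<phi> H 0 = (\<lambda>_. 0)"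
| "Gf P \<phi> H (Suc k) = (\<lambda>x. \<phi> (H - k) x + measure_pmf.expectation (P (H - k) x) (Gf P \<phi> H k))"

definition fv :: "(nat \<Rightarrow> 'z \<Rightarrow> 'z pmf) \<Rightarrow> (nat \<Rightarrow> 'z \<Rightarrow> real) \<Rightarrow> nat \<Rightarrow> nat \<Rightarrow> 'z \<Rightarrow> real" where
  "fv P \<phi> H l = Gf P \<phi> H (Suc H - l)"

lemma fv_rec: "l \<le> H \<Longrightarrow> fv P \<phi> H l x = \<phi> l x + measure_pmf.expectation (P l x) (fv P \<phi> H (Suc l))"
proof -
  assume "l \<le> H"
  hence "Suc H - l = Suc (H - l)" "H - (H - l) = l" "Suc H - Suc l = H - l" by auto
  thus ?thesis unfolding fv_def by simp
qed

lemma fv_zero: "H < l \<Longrightarrow> fv P \<phi> H l = (\<lambda>_. 0)"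
  unfolding fv_def by simp

definition Dinc :: "'z pmf \<Rightarrow> (nat \<Rightarrow> 'z \<Rightarrow> 'z pmf) \<Rightarrow> (nat \<Rightarrow> 'z \<Rightarrow> real) \<Rightarrow> nat \<Rightarrow> nat \<Rightarrow> (nat \<Rightarrow> 'z) \<Rightarrow> real" where
  "Dinc \<mu> P \<phi> H l x = fv P \<phi> H l (x l) - measure_pmf.expectation (step_kernel \<mu> P (l - 1) (x (l - 1))) (fv P \<phi> H l)"

lemma telescope:
  assumes "n \<le> H"
  shows "(\<Sum>l=1..n. Dinc \<mu> P \<phi> H l x) = (\<Sum>l=1..n. \<phi> l (x l))
     + measure_pmf.expectation (step_kernel \<mu> P n (x n)) (fv P \<phi> H (Suc n))
     - measure_pmf.expectation \<mu> (fv P \<phi> H 1)"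
  using assms
proof (induction n)
  case 0
  show ?case by (simp add: step_kernel_def)
next
  case (Suc n)
  have "Dinc \<mu> P \<phi> H (Suc n) x = \<phi> (Suc n) (x (Suc n))
     + measure_pmf.expectation (step_kernel \<mu> P (Suc n) (x (Suc n))) (fv P \<phi> H (Suc (Suc n)))
     - measure_pmf.expectation (step_kernel \<mu> P n (x n)) (fv P \<phi> H (Suc n))"
    unfolding Dinc_def using Suc.prems by (simp add: fv_rec step_kernel_def)
  thus ?case using Suc by simp
qed

lemma telescope_full:
  "(\<Sum>l=1..H. Dinc \<mu> P \<phi> H l x) = (\<Sum>l=1..H. \<phi> l (x l)) - measure_pmf.expectation \<mu> (fv P \<phi> H 1)"
  using telescope[of H H \<mu> P \<phi> x] by (simp add: fv_zero)

lemma fv_bound: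
  fixes P :: "nat \<Rightarrow> 'z::finite \<Rightarrow> 'z pmf" and \<phi> :: "nat \<Rightarrow> 'z \<Rightarrow> real" and H :: nat
  shows "\<bar>fv P \<phi> H l y\<bar> \<le> (\<Sum>l\<le>Suc H. \<Sum>y\<in>UNIV. \<bar>fv P \<phi> H l y\<bar>)" (is "_ \<le> ?C")
proof (cases "l \<le> Suc H")
  case True
  have "\<bar>fv P \<phi> H l y\<bar> \<le> (\<Sum>y\<in>UNIV. \<bar>fv P \<phi> H l y\<bar>)"
    by (rule member_le_sum) auto
  also have "\<dots> \<le> ?C"
    using True by (intro member_le_sum[where f="\<lambda>l. \<Sum>y\<in>UNIV. \<bar>fv P \<phi> H l y\<bar>"]) (auto intro: sum_nonneg)
  finally show ?thesis .
next
  case False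
  hence "fv P \<phi> H l = (\<lambda>_. 0)" by (intro fv_zero) auto
  moreover have "0 \<le> ?C" by (intro sum_nonneg) auto
  ultimately show ?thesis by simp
qed

lemma E_abs_le:
  fixes p :: "'z::finite pmf" and f :: "'z \<Rightarrow> real" assumes "\<And>y. \<bar>f y\<bar> \<le> C"
  shows "\<bar>measure_pmf.expectation p f\<bar> \<le> C"
proof -
  have "\<bar>measure_pmf.expectation p f\<bar> \<le> (\<Sum>z\<in>UNIV. \<bar>pmf p z * f z\<bar>)"
    unfolding E_sum by (rule sum_abs)
  also have "\<dots> \<le> (\<Sum>z\<in>UNIV. pmf p z * C)"
    using assms by (intro sum_mono) (auto simp: abs_mult intro: mult_left_mono)
  also have "\<dots> = C" by (simp add: sum_distrib_right[symmetric] pmf_sum1)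
  finally show ?thesis .
qed

lemma Dinc_bound:
  fixes P :: "nat \<Rightarrow> 'z::finite \<Rightarrow> 'z pmf"
  shows "\<bar>Dinc \<mu> P \<phi> H l x\<bar> \<le> 2 * (\<Sum>l\<le>Suc H. \<Sum>y\<in>UNIV. \<bar>fv P \<phi> H l y\<bar>)"
proof -
  have a: "\<bar>fv P \<phi> H l (x l)\<bar> \<le> (\<Sum>l\<le>Suc H. \<Sum>y\<in>UNIV. \<bar>fv P \<phi> H l y\<bar>)" by (rule fv_bound)
  have b: "\<bar>measure_pmf.expectation (step_kernel \<mu> P (l - 1) (x (l - 1))) (fv P \<phi> H l)\<bar> \<le> (\<Sum>l\<le>Suc H. \<Sum>y\<in>UNIV. \<bar>fv P \<phi> H l y\<bar>)"
    by (rule E_abs_le) (rule fv_bound)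
  show ?thesis unfolding Dinc_def using a b by linarith
qed

lemma E_path_Suc:
  fixes F :: "(nat \<Rightarrow> 'z) \<Rightarrow> real"
  assumes "\<And>x. \<bar>F x\<bar> \<le> C"
  shows "measure_pmf.expectation (markov_path \<mu> P (Suc n)) F
       = measure_pmf.expectation (markov_path \<mu> P n)
           (\<lambda>x. measure_pmf.expectation (step_kernel \<mu> P n (x n)) (\<lambda>z. F (x(Suc n := z))))"
  by (simp add: expectation_bind_pmf_bounded[OF assms])

lemma Dinc_upd:
  assumes "l \<le> n"
  shows "Dinc \<mu> P \<phi> H l (x(Suc n := z)) = Dinc \<mu> P \<phi> H l x"
  using assms unfolding Dinc_def by auto

lemma sum_Dinc_upd:
  "(\<Sum>l=1..Suc n. Dinc \<mu> P \<phi> H l (x(Suc n := z))) = (\<Sum>l=1..n. Dinc \<mu> P \<phi> H l x)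
     + (fv P \<phi> H (Suc n) z - measure_pmf.expectation (step_kernel \<mu> P n (x n)) (fv P \<phi> H (Suc n)))"
proof -
  have "(\<Sum>l=1..n. Dinc \<mu> P \<phi> H l (x(Suc n := z))) = (\<Sum>l=1..n. Dinc \<mu> P \<phi> H l x)"
    by (rule sum.cong) (auto intro: Dinc_upd)
  thus ?thesis by (simp add: Dinc_def)
qed

lemma mean_zero:
  fixes P :: "nat \<Rightarrow> 'z::finite \<Rightarrow> 'z pmf"
  shows "measure_pmf.expectation (markov_path \<mu> P n) (\<lambda>x. \<Sum>l=1..n. Dinc \<mu> P \<phi> H l x) = 0"
proof (induction n)
  case 0
  show ?case by simp
next
  case (Suc n)
  define K where "K = 2 * (\<Sum>l\<le>Suc H. \<Sum>y\<in>UNIV. \<bar>fv P \<phi> H l y\<bar>)"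
  have bnd: "\<bar>\<Sum>l=1..m. Dinc \<mu> P \<phi> H l x\<bar> \<le> real m * K" for m x
  proof -
    have "\<bar>\<Sum>l=1..m. Dinc \<mu> P \<phi> H l x\<bar> \<le> (\<Sum>l=1..m. \<bar>Dinc \<mu> P \<phi> H l x\<bar>)" by (rule sum_abs)
    also have "\<dots> \<le> (\<Sum>l=1..m. K)" unfolding K_def by (intro sum_mono Dinc_bound)
    finally show ?thesis by simp
  qed
  have inner: "measure_pmf.expectation (step_kernel \<mu> P n (x n))
      (\<lambda>z. \<Sum>l=1..Suc n. Dinc \<mu> P \<phi> H l (x(Suc n := z))) = (\<Sum>l=1..n. Dinc \<mu> P \<phi> H l x)" for x
  proof -
    define q where "q = step_kernel \<mu> P n (x n)"
    define A where "A = (\<Sum>l=1..n. Dinc \<mu> P \<phi> H l x)"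
    define f where "f = fv P \<phi> H (Suc n)"
    have "measure_pmf.expectation q (\<lambda>z. A + (f z - measure_pmf.expectation q f)) = A"
      by (simp add: E_sum algebra_simps sum.distrib sum_subtractf sum_distrib_right[symmetric] sum_distrib_left[symmetric] pmf_sum1)
    thus ?thesis unfolding sum_Dinc_upd q_def A_def f_def by simp
  qed
  show ?case
    by (subst E_path_Suc[OF bnd]) (simp only: inner Suc.IH)
qed



lemma sumD_bound:
  fixes P :: "nat \<Rightarrow> 'z::finite \<Rightarrow> 'z pmf"
  shows "\<bar>\<Sum>i=1..m. Dinc \<mu> P \<phi> H i x\<bar> \<le> real m * (2 * (\<Sum>l\<le>Suc H. \<Sum>y\<in>UNIV. \<bar>fv P \<phi> H l y\<bar>))"
proof -
  have "\<bar>\<Sum>i=1..m. Dinc \<mu> P \<phi> H i x\<bar> \<le> (\<Sum>i=1..m. \<bar>Dinc \<mu> P \<phi> H i x\<bar>)" by (rule sum_abs)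
  also have "\<dots> \<le> (\<Sum>i=1..m. 2 * (\<Sum>l\<le>Suc H. \<Sum>y\<in>UNIV. \<bar>fv P \<phi> H l y\<bar>))" by (intro sum_mono Dinc_bound)
  finally show ?thesis by simp
qed

lemma exp_abs_bound: "0 \<le> l \<Longrightarrow> \<bar>s\<bar> \<le> B \<Longrightarrow> \<bar>exp (l * s)\<bar> \<le> exp (l * B)"
  for l s B :: real
  by (simp add: abs_le_iff mult_left_mono)

lemma mgf_path:
  fixes P :: "nat \<Rightarrow> 'z::finite \<Rightarrow> 'z pmf"
  assumes osc: "\<And>n y y'. n < H \<Longrightarrow> fv P \<phi> H (Suc n) y - fv P \<phi> H (Suc n) y' \<le> b"
    and var: "\<And>n z. n < H \<Longrightarrow> measure_pmf.variance (step_kernel \<mu> P n z) (fv P \<phi> H (Suc n)) \<le> \<sigma>2"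
    and b: "0 < b" and l: "0 < l"
  shows "n \<le> H \<Longrightarrow> measure_pmf.expectation (markov_path \<mu> P n) (\<lambda>x. exp (l * (\<Sum>i=1..n. Dinc \<mu> P \<phi> H i x)))
           \<le> exp (real n * (\<sigma>2 * ((exp (l * b) - 1 - l * b) / b\<^sup>2)))"
proof (induction n)
  case 0
  show ?case by simp
next
  case (Suc n)
  define \<psi> where "\<psi> = (exp (l * b) - 1 - l * b) / b\<^sup>2"
  have e1: "1 + l * b \<le> exp (l * b)" by (rule exp_ge_add_one_self)
  have \<psi>0: "0 \<le> \<psi>" unfolding \<psi>_def by (rule divide_nonneg_nonneg) (use e1 in linarith, simp)
  define K where "K = 2 * (\<Sum>l\<le>Suc H. \<Sum>y\<in>UNIV. \<bar>fv P \<phi> H l y\<bar>)"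
  have sb: "\<bar>\<Sum>i=1..m. Dinc \<mu> P \<phi> H i x\<bar> \<le> real m * K" for m x unfolding K_def by (rule sumD_bound)
  have Fb: "\<bar>exp (l * (\<Sum>i=1..m. Dinc \<mu> P \<phi> H i x))\<bar> \<le> exp (l * (real m * K))" for m x
    using l sb by (intro exp_abs_bound) auto
  define A where "A = (\<lambda>x. \<Sum>i=1..n. Dinc \<mu> P \<phi> H i x)"
  define f where "f = fv P \<phi> H (Suc n)"
  have nH: "n < H" using Suc.prems by simp
  have inner: "measure_pmf.expectation (step_kernel \<mu> P n (x n))
      (\<lambda>z. exp (l * (\<Sum>i=1..Suc n. Dinc \<mu> P \<phi> H i (x(Suc n := z)))))
      \<le> exp (l * A x) * exp (\<sigma>2 * \<psi>)" for x
  proof -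
    define q where "q = step_kernel \<mu> P n (x n)"
    have "measure_pmf.expectation q (\<lambda>z. exp (l * (A x + (f z - measure_pmf.expectation q f))))
        = exp (l * A x) * measure_pmf.expectation q (\<lambda>z. exp (l * (f z - measure_pmf.expectation q f)))"
      by (simp add: E_sum distrib_left exp_add sum_distrib_left mult_ac)
    also have "\<dots> \<le> exp (l * A x) * exp (measure_pmf.variance q f * \<psi>)"
      unfolding \<psi>_def by (intro mult_left_mono mgf_step) (use osc[OF nH] b l in \<open>auto simp: f_def\<close>)
    also have "\<dots> \<le> exp (l * A x) * exp (\<sigma>2 * \<psi>)"
      using var[OF nH, of "x n"] \<psi>0 by (auto simp: q_def f_def intro!: mult_right_mono)
    finally show ?thesis unfolding sum_Dinc_upd q_def A_def f_def .
  qed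
  have "measure_pmf.expectation (markov_path \<mu> P (Suc n)) (\<lambda>x. exp (l * (\<Sum>i=1..Suc n. Dinc \<mu> P \<phi> H i x)))
     = measure_pmf.expectation (markov_path \<mu> P n) (\<lambda>x. measure_pmf.expectation (step_kernel \<mu> P n (x n))
      (\<lambda>z. exp (l * (\<Sum>i=1..Suc n. Dinc \<mu> P \<phi> H i (x(Suc n := z))))))"
    by (rule E_path_Suc[OF Fb])
  also have "\<dots> \<le> measure_pmf.expectation (markov_path \<mu> P n) (\<lambda>x. exp (l * A x) * exp (\<sigma>2 * \<psi>))"
  proof (rule integral_mono)
    show "integrable (measure_pmf (markov_path \<mu> P n)) (\<lambda>x. measure_pmf.expectation (step_kernel \<mu> P n (x n))
      (\<lambda>z. exp (l * (\<Sum>i=1..Suc n. Dinc \<mu> P \<phi> H i (x(Suc n := z))))))"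
      by (rule int_bounded, rule E_abs_le, rule Fb)
    show "integrable (measure_pmf (markov_path \<mu> P n)) (\<lambda>x. exp (l * A x) * exp (\<sigma>2 * \<psi>))"
      unfolding A_def by (intro integrable_mult_left int_bounded[OF Fb])
  qed (rule inner)
  also have "\<dots> = measure_pmf.expectation (markov_path \<mu> P n) (\<lambda>x. exp (l * A x)) * exp (\<sigma>2 * \<psi>)"
    by simp
  also have "\<dots> \<le> exp (real n * (\<sigma>2 * \<psi>)) * exp (\<sigma>2 * \<psi>)"
    using Suc.IH Suc.prems unfolding A_def \<psi>_def by (intro mult_right_mono) auto
  also have "\<dots> = exp (real (Suc n) * (\<sigma>2 * \<psi>))"
    by (simp add: exp_add[symmetric] algebra_simps)
  finally show ?case unfolding \<psi>_def .
qed



lemma E_add: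
  fixes p :: "'z::finite pmf" and a b :: "'z \<Rightarrow> real"
  shows "measure_pmf.expectation p (\<lambda>x. a x + b x) = measure_pmf.expectation p a + measure_pmf.expectation p b"
  by (simp add: E_sum distrib_left sum.distrib)

lemma osc_Gf:
  fixes P :: "nat \<Rightarrow> 'z::finite \<Rightarrow> 'z pmf"
  assumes eta: "1 \<le> \<eta>" and reg: "\<And>h. 1 \<le> h \<Longrightarrow> colreg \<eta> (P h)"
    and B: "\<And>h z. h \<in> {1..H} \<Longrightarrow> \<bar>\<phi> h z\<bar> \<le> B" and B0: "0 \<le> B"
  shows "k \<le> H \<Longrightarrow> Gf P \<phi> H k y - Gf P \<phi> H k y' \<le> 2 * B * \<eta>"
proof (induction k arbitrary: y y')
  case 0
  show ?case using eta B0 by simp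
next
  case (Suc k)
  have h: "H - k \<in> {1..H}" using Suc.prems by auto
  have "\<phi> (H - k) y - \<phi> (H - k) y' \<le> 2 * B"
    using B[OF h, of y] B[OF h, of y'] by (simp add: abs_le_iff)
  moreover have "measure_pmf.expectation (P (H - k) y) (Gf P \<phi> H k) - measure_pmf.expectation (P (H - k) y') (Gf P \<phi> H k)
     \<le> (1 - 1 / \<eta>) * (2 * B * \<eta>)"
    by (rule dobrushin[OF reg eta]) (use h Suc in auto)
  moreover have "(1 - 1 / \<eta>) * (2 * B * \<eta>) = 2 * B * \<eta> - 2 * B" using eta by (simp add: field_simps)
  ultimately show ?case by simp
qed

lemma osc_R:
  fixes P :: "nat \<Rightarrow> 'z::finite \<Rightarrow> 'z pmf"
  assumes eta: "1 \<le> \<eta>" and reg: "\<And>h. 1 \<le> h \<Longrightarrow> colreg \<eta> (P h)"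
    and V: "\<And>l z. l \<in> {1..H} \<Longrightarrow> measure_pmf.variance (step_kernel \<mu> P (l - 1) z) (\<phi> l) \<le> m"
    and m0: "0 \<le> m"
  shows "k < H \<Longrightarrow> measure_pmf.expectation (P (H - k) y) (Gf P \<phi> H k) - measure_pmf.expectation (P (H - k) y') (Gf P \<phi> H k)
           \<le> \<eta> * (\<eta> - 1) * sqrt m"
proof (induction k arbitrary: y y')
  case 0
  show ?case using eta m0 by simp
next
  case (Suc k)
  define j where "j = H - Suc k"
  have j1: "1 \<le> j" and hk: "H - k = Suc j" using Suc.prems by (auto simp: j_def)
  define R where "R = (\<lambda>x. measure_pmf.expectation (P (H - k) x) (Gf P \<phi> H k))"
  have Rosc: "R x - R x' \<le> \<eta> * (\<eta> - 1) * sqrt m" for x x'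
    unfolding R_def using Suc by auto
  have G: "Gf P \<phi> H (Suc k) = (\<lambda>x. \<phi> (Suc j) x + R x)" by (simp add: R_def hk)
  have "measure_pmf.expectation (P j y) (\<phi> (Suc j)) - measure_pmf.expectation (P j y') (\<phi> (Suc j))
      \<le> (\<eta> - 1) * sqrt (measure_pmf.variance (P j y') (\<phi> (Suc j)))"
    by (rule meandiff[OF reg[OF j1] eta])
  also have "\<dots> \<le> (\<eta> - 1) * sqrt m"
  proof -
    have "measure_pmf.variance (P j y') (\<phi> (Suc j)) \<le> m"
      using V[of "Suc j" y'] j1 hk Suc.prems by (auto simp: step_kernel_def)
    thus ?thesis using eta by (intro mult_left_mono) auto
  qed
  finally have 1: "measure_pmf.expectation (P j y) (\<phi> (Suc j)) - measure_pmf.expectation (P j y') (\<phi> (Suc j))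
      \<le> (\<eta> - 1) * sqrt m" .
  have 2: "measure_pmf.expectation (P j y) R - measure_pmf.expectation (P j y') R
      \<le> (1 - 1 / \<eta>) * (\<eta> * (\<eta> - 1) * sqrt m)"
    by (rule dobrushin[OF reg[OF j1] eta Rosc])
  have 3: "(\<eta> - 1) * sqrt m + (1 - 1 / \<eta>) * (\<eta> * (\<eta> - 1) * sqrt m) = \<eta> * (\<eta> - 1) * sqrt m"
    using eta by (simp add: field_simps)
  have hj: "H - Suc k = j" by (simp add: j_def)
  show ?case unfolding G E_add hj using 1 2 3 by linarith
qed

lemma var_fv:
  fixes P :: "nat \<Rightarrow> 'z::finite \<Rightarrow> 'z pmf"
  assumes eta: "1 \<le> \<eta>" and reg: "\<And>h. 1 \<le> h \<Longrightarrow> colreg \<eta> (P h)"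
    and V: "\<And>l z. l \<in> {1..H} \<Longrightarrow> measure_pmf.variance (step_kernel \<mu> P (l - 1) z) (\<phi> l) \<le> m"
    and m0: "0 \<le> m" and n: "n < H"
  shows "measure_pmf.variance (step_kernel \<mu> P n z) (fv P \<phi> H (Suc n)) \<le> (sqrt m + \<eta> * (\<eta> - 1) * sqrt m / 2)\<^sup>2"
proof -
  define k where "k = H - Suc n"
  have kH: "k < H" "H - k = Suc n" using n by (auto simp: k_def)
  have fvk: "fv P \<phi> H (Suc (Suc n)) = Gf P \<phi> H k" by (simp add: fv_def k_def)
  define R where "R = (\<lambda>x. measure_pmf.expectation (P (Suc n) x) (fv P \<phi> H (Suc (Suc n))))"
  have f: "fv P \<phi> H (Suc n) = (\<lambda>x. \<phi> (Suc n) x + R x)"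
    using n by (auto simp: fv_rec R_def)
  have Rosc: "R y - R y' \<le> \<eta> * (\<eta> - 1) * sqrt m" for y y'
    unfolding R_def fvk using osc_R[OF eta reg V m0 kH(1), of y y'] kH(2) by simp
  have "measure_pmf.variance (step_kernel \<mu> P n z) (fv P \<phi> H (Suc n))
     \<le> (sqrt (measure_pmf.variance (step_kernel \<mu> P n z) (\<phi> (Suc n))) + \<eta> * (\<eta> - 1) * sqrt m / 2)\<^sup>2"
    unfolding f by (rule var_add_osc[OF Rosc])
  also have "\<dots> \<le> (sqrt m + \<eta> * (\<eta> - 1) * sqrt m / 2)\<^sup>2"
  proof (rule power_mono)
    have "measure_pmf.variance (step_kernel \<mu> P n z) (\<phi> (Suc n)) \<le> m"
      using V[of "Suc n" z] n by auto
    hence "sqrt (measure_pmf.variance (step_kernel \<mu> P n z) (\<phi> (Suc n))) \<le> sqrt m" by simp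
    thus "sqrt (measure_pmf.variance (step_kernel \<mu> P n z) (\<phi> (Suc n))) + \<eta> * (\<eta> - 1) * sqrt m / 2
        \<le> sqrt m + \<eta> * (\<eta> - 1) * sqrt m / 2" by simp
    show "0 \<le> sqrt (measure_pmf.variance (step_kernel \<mu> P n z) (\<phi> (Suc n))) + \<eta> * (\<eta> - 1) * sqrt m / 2"
      using eta m0 by (intro add_nonneg_nonneg) (auto intro!: mult_nonneg_nonneg)
  qed
  finally show ?thesis .
qed



lemma choose_lambda:
  fixes b \<rho> v D :: real
  assumes b: "0 < b" and \<rho>: "0 < \<rho>" and v: "0 \<le> v" and D: "10 * v + b * \<rho> / 3 \<le> D"
  shows "\<exists>l>0. - (l * \<rho>) + v * ((exp (l * b) - 1 - l * b) / b\<^sup>2) \<le> - (\<rho>\<^sup>2 / D)"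
proof (cases "v = 0")
  case True
  have D0: "0 < b * \<rho> / 3" using b \<rho> by simp
  have "\<rho>\<^sup>2 / D \<le> \<rho>\<^sup>2 / (b * \<rho> / 3)"
    using D True D0 by (intro divide_left_mono) auto
  also have "\<dots> = (3 / b) * \<rho>" using b \<rho> by (simp add: field_simps power2_eq_square)
  finally have "- ((3 / b) * \<rho>) \<le> - (\<rho>\<^sup>2 / D)" by simp
  thus ?thesis using True b by (intro exI[of _ "3 / b"]) auto
next
  case False
  hence v0: "0 < v" using v by simp
  define u where "u = b * \<rho> / v"
  have u0: "0 < u" unfolding u_def using b \<rho> v0 by simp
  define L where "L = ln (1 + u)"
  define l where "l = L / b"
  have l0: "0 < l" unfolding l_def L_def using u0 b by simp
  have e: "exp (l * b) = 1 + u" unfolding l_def L_def using b u0 by simp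
  have \<rho>u: "\<rho> = u * v / b" unfolding u_def using b v0 by simp
  have lhs: "- (l * \<rho>) + v * ((exp (l * b) - 1 - l * b) / b\<^sup>2) = - (v / b\<^sup>2 * ((1 + u) * L - u))"
    unfolding e \<rho>u using b by (simp add: l_def field_simps power2_eq_square)
  have hi: "u\<^sup>2 / (10 + u / 3) \<le> (1 + u) * L - u"
    using h_ineq[of u] u0 unfolding L_def by (simp add: divide_le_eq mult.commute)
  have r: "\<rho>\<^sup>2 / (10 * v + b * \<rho> / 3) = v / b\<^sup>2 * (u\<^sup>2 / (10 + u / 3))"
  proof -
    have d1: "10 * v + b * (u * v / b) / 3 = v * (10 + u / 3)" using b by (simp add: field_simps)
    have n1: "10 + u / 3 \<noteq> 0" "30 + u \<noteq> 0" "u + 30 \<noteq> 0" using u0 by auto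
    have x1: "(u * v / b)\<^sup>2 = v * (v * u\<^sup>2 / b\<^sup>2)" using b by (simp add: power2_eq_square field_simps)
    have "(u * v / b)\<^sup>2 / (v * (10 + u / 3)) = (v * u\<^sup>2 / b\<^sup>2) / (10 + u / 3)"
      unfolding x1 using v0 by simp
    also have "\<dots> = v / b\<^sup>2 * (u\<^sup>2 / (10 + u / 3))" by simp
    finally show ?thesis unfolding \<rho>u d1 .
  qed
  have p1: "0 < 10 * v + b * \<rho> / 3" using v0 b \<rho> by (simp add: add_pos_pos)
  have "\<rho>\<^sup>2 / D \<le> \<rho>\<^sup>2 / (10 * v + b * \<rho> / 3)"
    using D p1 by (intro divide_left_mono mult_pos_pos) auto
  also have "\<dots> \<le> v / b\<^sup>2 * ((1 + u) * L - u)"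
    unfolding r using hi v0 b by (intro mult_left_mono) auto
  finally show ?thesis using l0 lhs by (intro exI[of _ l]) auto
qed

lemma const_ineq:
  fixes \<eta> :: real assumes "1 \<le> \<eta>"
  shows "5 * (1 + \<eta> * (\<eta> - 1) / 2)\<^sup>2 \<le> (1 + sqrt 2 * \<eta> * (2 * \<eta> - 1))\<^sup>2"
proof -
  have s2: "(1414/1000) \<le> sqrt (2::real)" by (rule real_le_rsqrt) (simp add: power2_eq_square)
  define q where "q = \<eta> * \<eta>"
  have e1: "\<eta> * (\<eta> - 1) = q - \<eta>" "\<eta> * (2 * \<eta> - 1) = 2 * q - \<eta>" unfolding q_def by (simp_all add: algebra_simps)
  have p: "0 \<le> 2 * q - \<eta>" using assms e1(2)[symmetric] by simp
  define w where "w = sqrt 2 * (2 * q - \<eta>)"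
  have wq: "(1414/1000) * (2 * q - \<eta>) \<le> w"
    unfolding w_def using s2 p by (rule mult_right_mono)
  have qb: "2 * \<eta> - 1 \<le> q" unfolding q_def using mult_nonneg_nonneg[of "\<eta> - 1" "\<eta> - 1"] assms by (simp add: algebra_simps)
  have "(9/4) * (1 + (q - \<eta>) / 2) \<le> 1 + w" using wq qb assms by (simp add: field_simps)
  hence a: "(9/4) * (1 + \<eta> * (\<eta> - 1) / 2) \<le> 1 + sqrt 2 * \<eta> * (2 * \<eta> - 1)"
    unfolding e1 w_def mult.assoc[symmetric] by (simp add: mult.assoc e1)
  have a0: "0 \<le> (9/4) * (1 + \<eta> * (\<eta> - 1) / 2)" using assms by simp
  have "5 * (1 + \<eta> * (\<eta> - 1) / 2)\<^sup>2 \<le> ((9/4) * (1 + \<eta> * (\<eta> - 1) / 2))\<^sup>2"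
  proof -
    define X where "X = 1 + \<eta> * (\<eta> - 1) / 2"
    have "((9/4) * X)\<^sup>2 = 81/16 * X\<^sup>2" by (simp add: power_mult_distrib power2_eq_square)
    moreover have "0 \<le> X\<^sup>2" by simp
    ultimately show ?thesis unfolding X_def[symmetric] by linarith
  qed
  also have "\<dots> \<le> (1 + sqrt 2 * \<eta> * (2 * \<eta> - 1))\<^sup>2"
    using a a0 by (rule power_mono)
  finally show ?thesis .
qed



theorem theorem9:
  fixes \<mu> :: "'z::finite pmf" and P :: "nat \<Rightarrow> 'z \<Rightarrow> 'z pmf"
    and \<phi> :: "nat \<Rightarrow> 'z \<Rightarrow> real" and \<eta> \<rho> :: real and H T :: nat
  assumes "\<eta> \<ge> 1"
    and "regular_dist \<eta> \<mu>"
    and "\<And>h. h \<ge> 1 \<Longrightarrow> regular_kernel \<eta> (P h)"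
    and "\<And>h. h \<ge> 1 \<Longrightarrow> \<exists>\<nu>. stationary (P h) \<nu>"
    and "\<rho> \<ge> 0"
  shows "measure_pmf.prob (iid_paths \<mu> P H T)
           {X. (\<Sum>t=1..T. \<Sum>h=1..H. \<phi> h (X t h)
                 - measure_pmf.expectation (markov_path \<mu> P H) (\<lambda>x. \<phi> h (x h))) > \<rho>}
         \<le> exp (- (\<rho>\<^sup>2 / (2 * real T * real H * V_const \<eta> \<mu> P \<phi> H
                          + 2 / 3 * M_const \<eta> \<phi> H * \<rho>)))"
    (is "measure_pmf.prob ?Q {X. ?Y X > \<rho>} \<le> ?rhs")
proof -
  note eta = assms(1) and \<rho>0 = assms(5)
  define Ph where "Ph = markov_path \<mu> P H"
  define Eh where "Eh = (\<lambda>h. measure_pmf.expectation Ph (\<lambda>x. \<phi> h (x h)))"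
  have Y_def: "?Y X = (\<Sum>t=1..T. \<Sum>h=1..H. \<phi> h (X t h) - Eh h)" for X by (simp add: Eh_def Ph_def)
  have rhs_pos: "0 \<le> ?rhs" by simp
  show ?thesis
  proof (cases "H = 0 \<or> T = 0")
    case True
    hence "{X. ?Y X > \<rho>} = {}" using \<rho>0 by auto
    thus ?thesis using rhs_pos by simp
  next
    case False
    hence H1: "1 \<le> H" and T1: "1 \<le> T" by auto
    define B where "B = Max {\<bar>\<phi> h z\<bar> | h z. h \<in> {1..H}}"
    have finB: "finite {\<bar>\<phi> h z\<bar> | h z. h \<in> {1..H}}"
    proof -
      have "{\<bar>\<phi> h z\<bar> | h z. h \<in> {1..H}} = (\<lambda>(h, z). \<bar>\<phi> h z\<bar>) ` ({1..H} \<times> UNIV)" by auto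
      thus ?thesis by simp
    qed
    have Bge: "\<bar>\<phi> h z\<bar> \<le> B" if "h \<in> {1..H}" for h z
      unfolding B_def using that by (intro Max_ge[OF finB]) auto
    have B0: "0 \<le> B" using Bge[of 1 undefined] H1 by (auto intro: order.trans[OF abs_ge_zero])
    have Mc: "M_const \<eta> \<phi> H = (2 * \<eta> - 1) * B" by (simp add: M_const_def B_def)
    define m where "m = Max {measure_pmf.variance (step_kernel \<mu> P (l - 1) z) (\<phi> h) | z l h. 1 \<le> l \<and> l \<le> h \<and> h \<le> H}"
    have finm: "finite {measure_pmf.variance (step_kernel \<mu> P (l - 1) z) (\<phi> h) | z l h. 1 \<le> l \<and> l \<le> h \<and> h \<le> H}"
    proof (rule finite_subset)
      show "{measure_pmf.variance (step_kernel \<mu> P (l - 1) z) (\<phi> h) | z l h. 1 \<le> l \<and> l \<le> h \<and> h \<le> H}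
          \<subseteq> (\<lambda>(z, l, h). measure_pmf.variance (step_kernel \<mu> P (l - 1) z) (\<phi> h)) ` (UNIV \<times> {..H} \<times> {..H})"
      proof (rule subsetI)
        fix y assume "y \<in> {measure_pmf.variance (step_kernel \<mu> P (l - 1) z) (\<phi> h) | z l h. 1 \<le> l \<and> l \<le> h \<and> h \<le> H}"
        then obtain z l h where y: "y = measure_pmf.variance (step_kernel \<mu> P (l - 1) z) (\<phi> h)" "1 \<le> l" "l \<le> h" "h \<le> H"
          by blast
        show "y \<in> (\<lambda>(z, l, h). measure_pmf.variance (step_kernel \<mu> P (l - 1) z) (\<phi> h)) ` (UNIV \<times> {..H} \<times> {..H})"
          by (rule image_eqI[where x="(z, l, h)"]) (use y in auto)
      qed
    qed simp
    have Vm: "measure_pmf.variance (step_kernel \<mu> P (l - 1) z) (\<phi> l) \<le> m" if "l \<in> {1..H}" for l z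
      unfolding m_def using that by (intro Max_ge[OF finm]) auto
    have m0: "0 \<le> m" using Vm[of 1 undefined] H1 by (auto intro: order.trans[OF measure_pmf.variance_positive])
    have Vc: "V_const \<eta> \<mu> P \<phi> H = (1 + sqrt 2 * \<eta> * (2 * \<eta> - 1))\<^sup>2 * m" by (simp add: V_const_def m_def)
    show ?thesis
    proof (cases "B = 0")
      case True
      hence "\<phi> h z = 0" if "h \<in> {1..H}" for h z using Bge[OF that, of z] by simp
      hence "?Y X = 0" for X by (simp add: Eh_def Y_def)
      hence "{X. ?Y X > \<rho>} = {}" using \<rho>0 by auto
      thus ?thesis using rhs_pos by simp
    next
      case False
      hence Bp: "0 < B" using B0 by simp
      have reg: "colreg \<eta> (P h)" if "1 \<le> h" for h
        using assms(3)[OF that] by (auto simp: regular_kernel_def colreg_def)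
      define \<sigma>2 where "\<sigma>2 = (sqrt m + \<eta> * (\<eta> - 1) * sqrt m / 2)\<^sup>2"
      define b where "b = 2 * ((2 * \<eta> - 1) * B)"
      have b0: "0 < b" unfolding b_def using Bp eta by simp
      have osc: "fv P \<phi> H (Suc n) y - fv P \<phi> H (Suc n) y' \<le> b" if "n < H" for n y y'
      proof -
        have "fv P \<phi> H (Suc n) y - fv P \<phi> H (Suc n) y' \<le> 2 * B * \<eta>"
          unfolding fv_def using that by (intro osc_Gf[OF eta reg Bge B0]) auto
        also have "\<dots> \<le> b" unfolding b_def using eta B0 mult_left_mono[of 1 \<eta> B] by (simp add: algebra_simps)
        finally show ?thesis .
      qed
      have var: "measure_pmf.variance (step_kernel \<mu> P n z) (fv P \<phi> H (Suc n)) \<le> \<sigma>2" if "n < H" for n z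
        unfolding \<sigma>2_def by (rule var_fv[OF eta reg Vm m0 that])
      define Sd where "Sd = (\<lambda>x. \<Sum>i=1..H. Dinc \<mu> P \<phi> H i x)"
      have mgf: "measure_pmf.expectation Ph (\<lambda>x. exp (l * Sd x))
           \<le> exp (real H * (\<sigma>2 * ((exp (l * b) - 1 - l * b) / b\<^sup>2)))" if "0 < l" for l
        unfolding Ph_def Sd_def by (rule mgf_path[OF osc var b0 that]) auto
      define K where "K = 2 * (\<Sum>l\<le>Suc H. \<Sum>y\<in>UNIV. \<bar>fv P \<phi> H l y\<bar>)"
      have Sdb: "\<bar>Sd x\<bar> \<le> real H * K" for x unfolding Sd_def K_def by (rule sumD_bound)
      define c0 where "c0 = measure_pmf.expectation \<mu> (fv P \<phi> H 1)"
      have Sd_eq: "Sd x = (\<Sum>h=1..H. \<phi> h (x h)) - c0" for x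
        unfolding Sd_def c0_def by (rule telescope_full)
      have phib: "\<bar>\<phi> h (x h)\<bar> \<le> (\<Sum>z\<in>UNIV. \<bar>\<phi> h z\<bar>)" for h and x :: "nat \<Rightarrow> 'z"
        by (rule member_le_sum[where f="\<lambda>z. \<bar>\<phi> h z\<bar>"]) auto
      have sumEh: "(\<Sum>h=1..H. Eh h) = c0"
      proof -
        have "0 = measure_pmf.expectation Ph Sd" unfolding Ph_def Sd_def by (rule mean_zero[symmetric])
        also have "\<dots> = measure_pmf.expectation Ph (\<lambda>x. (\<Sum>h=1..H. \<phi> h (x h)) - c0)"
          by (rule arg_cong[where f="measure_pmf.expectation Ph"]) (rule ext, rule Sd_eq)
        also have "\<dots> = measure_pmf.expectation Ph (\<lambda>x. \<Sum>h=1..H. \<phi> h (x h)) - c0"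
          by (subst Bochner_Integration.integral_diff)
             (auto intro!: int_bounded[OF phib] Bochner_Integration.integrable_sum)
        also have "measure_pmf.expectation Ph (\<lambda>x. \<Sum>h=1..H. \<phi> h (x h)) = (\<Sum>h=1..H. Eh h)"
          unfolding Eh_def by (rule Bochner_Integration.integral_sum) (rule int_bounded[OF phib])
        finally show ?thesis by simp
      qed
      have YS: "?Y X = (\<Sum>t=1..T. Sd (X t))" for X
        unfolding Y_def by (rule sum.cong[OF refl]) (simp only: sum_subtractf sumEh Sd_eq)
      have chern: "measure_pmf.prob ?Q {X. ?Y X > \<rho>}
          \<le> exp (- (l * \<rho>) + real T * (real H * (\<sigma>2 * ((exp (l * b) - 1 - l * b) / b\<^sup>2))))" if l0: "0 < l" for l
      proof -
        have Q: "?Q = Pi_pmf {1..T} (\<lambda>_. undefined) (\<lambda>_. Ph)" by (simp add: iid_paths_def Ph_def)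
        have fe: "(\<lambda>X. exp (l * (?Y X - \<rho>))) = (\<lambda>X. exp (- (l * \<rho>)) * (\<Prod>t\<in>{1..T}. exp (l * Sd (X t))))"
        proof (rule ext)
          fix X
          have "exp (l * (?Y X - \<rho>)) = exp (- (l * \<rho>) + l * (\<Sum>t=1..T. Sd (X t)))"
            unfolding YS by (simp add: algebra_simps)
          also have "\<dots> = exp (- (l * \<rho>)) * (\<Prod>t\<in>{1..T}. exp (l * Sd (X t)))"
            by (simp only: exp_add sum_distrib_left exp_sum[OF finite_atLeastAtMost])
          finally show "exp (l * (?Y X - \<rho>)) = exp (- (l * \<rho>)) * (\<Prod>t\<in>{1..T}. exp (l * Sd (X t)))" .
        qed
        have int1: "integrable (measure_pmf ?Q) (\<lambda>X. exp (l * (?Y X - \<rho>)))"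
          unfolding fe Q
          by (intro integrable_mult_right integrable_prod_Pi_pmf) (auto intro!: int_bounded exp_abs_bound Sdb l0[THEN less_imp_le])
        have mono: "\<And>x y. x \<le> y \<Longrightarrow> exp (- (l * \<rho>)) * x \<le> exp (- (l * \<rho>)) * y"
          by (simp add: mult_left_mono)
        have "measure_pmf.prob ?Q {X. ?Y X > \<rho>} = measure_pmf.expectation ?Q (indicator {X. ?Y X > \<rho>} :: _ \<Rightarrow> real)"
          by simp
        also have "\<dots> \<le> measure_pmf.expectation ?Q (\<lambda>X. exp (l * (?Y X - \<rho>)))"
        proof (rule integral_mono[OF _ int1])
          show "integrable (measure_pmf ?Q) (indicator {X. ?Y X > \<rho>} :: _ \<Rightarrow> real)"
            by (rule int_bounded[where C=1]) (simp add: indicator_def)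
          fix X
          show "(indicator {X. ?Y X > \<rho>} X :: real) \<le> exp (l * (?Y X - \<rho>))"
          proof (cases "?Y X > \<rho>")
            case True
            hence "0 \<le> l * (?Y X - \<rho>)" using l0 by simp
            thus ?thesis using True by simp
          qed simp
        qed
        also have "\<dots> = exp (- (l * \<rho>)) * measure_pmf.expectation (Pi_pmf {1..T} (\<lambda>_. undefined) (\<lambda>_. Ph)) (\<lambda>X. \<Prod>t\<in>{1..T}. exp (l * Sd (X t)))"
          unfolding fe Q by simp
        also have "measure_pmf.expectation (Pi_pmf {1..T} (\<lambda>_. undefined) (\<lambda>_. Ph)) (\<lambda>X. \<Prod>t\<in>{1..T}. exp (l * Sd (X t)))
            = (\<Prod>t\<in>{1..T}. measure_pmf.expectation Ph (\<lambda>x. exp (l * Sd x)))"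
          by (rule expectation_prod_Pi_pmf) (auto intro!: int_bounded exp_abs_bound Sdb l0[THEN less_imp_le])
        also have "\<dots> \<le> (\<Prod>t\<in>{1..T}. exp (real H * (\<sigma>2 * ((exp (l * b) - 1 - l * b) / b\<^sup>2))))"
          by (intro prod_mono conjI mgf[OF l0] Bochner_Integration.integral_nonneg) auto
        also have "\<dots> = exp (real T * (real H * (\<sigma>2 * ((exp (l * b) - 1 - l * b) / b\<^sup>2))))"
          by (simp add: exp_of_nat_mult[symmetric])
        finally show ?thesis unfolding exp_add using mono by blast
      qed
      show ?thesis
      proof (cases "\<rho> = 0")
        case True
        thus ?thesis by simp
      next
        case False
        hence \<rho>p: "0 < \<rho>" using \<rho>0 by simp
        define v where "v = real T * (real H * \<sigma>2)"
        have v0: "0 \<le> v" unfolding v_def \<sigma>2_def by simp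
        have s2: "\<sigma>2 = m * (1 + \<eta> * (\<eta> - 1) / 2)\<^sup>2"
          unfolding \<sigma>2_def using m0 by (simp add: power2_eq_square algebra_simps)
        have "5 * \<sigma>2 \<le> (1 + sqrt 2 * \<eta> * (2 * \<eta> - 1))\<^sup>2 * m"
        proof -
          have "m * (5 * (1 + \<eta> * (\<eta> - 1) / 2)\<^sup>2) \<le> m * (1 + sqrt 2 * \<eta> * (2 * \<eta> - 1))\<^sup>2"
            using const_ineq[OF eta] m0 by (rule mult_left_mono)
          thus ?thesis unfolding s2 by (simp add: mult_ac)
        qed
        hence "(2 * real T * real H) * (5 * \<sigma>2) \<le> (2 * real T * real H) * ((1 + sqrt 2 * \<eta> * (2 * \<eta> - 1))\<^sup>2 * m)"
          by (rule mult_left_mono) simp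
        moreover have "10 * v = (2 * real T * real H) * (5 * \<sigma>2)" unfolding v_def by (simp add: algebra_simps)
        moreover have "2 * real T * real H * V_const \<eta> \<mu> P \<phi> H = (2 * real T * real H) * ((1 + sqrt 2 * \<eta> * (2 * \<eta> - 1))\<^sup>2 * m)"
          unfolding Vc by simp
        ultimately have "10 * v \<le> 2 * real T * real H * V_const \<eta> \<mu> P \<phi> H" by (simp only:)
        moreover have "b * \<rho> / 3 = 2 / 3 * M_const \<eta> \<phi> H * \<rho>" unfolding Mc b_def by simp
        ultimately have D: "10 * v + b * \<rho> / 3 \<le> 2 * real T * real H * V_const \<eta> \<mu> P \<phi> H + 2 / 3 * M_const \<eta> \<phi> H * \<rho>"
          by linarith
        obtain l where l0: "0 < l" and lb: "- (l * \<rho>) + v * ((exp (l * b) - 1 - l * b) / b\<^sup>2)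
            \<le> - (\<rho>\<^sup>2 / (2 * real T * real H * V_const \<eta> \<mu> P \<phi> H + 2 / 3 * M_const \<eta> \<phi> H * \<rho>))"
          using choose_lambda[OF b0 \<rho>p v0 D] by blast
        have "measure_pmf.prob ?Q {X. ?Y X > \<rho>} \<le> exp (- (l * \<rho>) + v * ((exp (l * b) - 1 - l * b) / b\<^sup>2))"
          using chern[OF l0] unfolding v_def by (simp add: mult.assoc)
        also have "\<dots> \<le> ?rhs" using lb by simp
        finally show ?thesis .
      qed
    qed
  qed
qed

end
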